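(* For all $t_1, t_2 \in \mathcal{L}_s$, $t_1 =_{\mathcal{L}} t_2$ if and only if $t_1 = t_2$ (syntactic equality, i.e. same symbol and same arguments).
   Context: $\mathcal{X}$ is a countable set of variables; a valuation is $\sigma\colon\mathcal{X}\to\mathbb{N}$. For finite $E\subseteq\mathcal{X}$, $x\in\mathcal{X}$, $S\in\mathbb{N}$, the sublevels $A(E,x,S)$ and $B(E,S)$ have values $[A(E,x,S)]_\sigma = 0$ if some $y\in E$ has $\sigma(y)=0$, and $\sigma(x)+S$ otherwise; $[B(E,S)]_\sigma=0$ if some $y\in E$ has $\sigma(y)=0$, and $S$ otherwise. $\mathcal{L}_s$ is the set of sublevels $A(E,x,S)$ with $x \in E$ and $B(E,S)$ with $S>0$. $t_1 =_{\mathcal{L}} t_2$ means $[t_1]_\sigma = [t_2]_\sigma$ for every valuation $\sigma$. *)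

theory Defs
  imports "HOL-Library.Countable"
begin

datatype 'v sublevel = A "'v set" 'v nat | B "'v set" nat

fun sval :: "('v \<Rightarrow> nat) \<Rightarrow> 'v sublevel \<Rightarrow> nat" where
  "sval \<sigma> (A E x S) = (if \<exists>y\<in>E. \<sigma> y = 0 then 0 else \<sigma> x + S)"
| "sval \<sigma> (B E S) = (if \<exists>y\<in>E. \<sigma> y = 0 then 0 else S)"

fun in_Ls :: "'v sublevel \<Rightarrow> bool" where
  "in_Ls (A E x S) = (finite E \<and> x \<in> E)"
| "in_Ls (B E S) = (finite E \<and> S > 0)"

definition sem_eq :: "'v sublevel \<Rightarrow> 'v sublevel \<Rightarrow> bool" where
  "sem_eq t1 t2 \<longleftrightarrow> (\<forall>\<sigma>. sval \<sigma> t1 = sval \<sigma> t2)"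

end

theory Submission
  imports Defs
begin

fun ev :: "'v sublevel \<Rightarrow> 'v set" where
  "ev (A E x S) = E" | "ev (B E S) = E"

lemma pos: "in_Ls t \<Longrightarrow> y \<notin> ev t \<Longrightarrow> sval (\<lambda>v. if v = y then 0 else Suc k) t > 0"
  by (cases t) auto

lemma zero: "y \<in> ev t \<Longrightarrow> sval (\<lambda>v. if v = y then 0 else Suc k) t = 0"
  by (cases t) auto

lemma same_ev:
  assumes "in_Ls t1" "in_Ls t2" "sem_eq t1 t2" shows "ev t1 = ev t2"
proof (rule ccontr)
  assume "ev t1 \<noteq> ev t2"
  then obtain y where "(y \<in> ev t1 \<and> y \<notin> ev t2) \<or> (y \<in> ev t2 \<and> y \<notin> ev t1)" by blast
  then show False using assms pos[of t1 y 0] pos[of t2 y 0] zero[of y t1 0] zero[of y t2 0]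
    unfolding sem_eq_def by (metis less_irrefl)
qed

theorem corollary30:
  fixes t1 t2 :: "'v::countable sublevel"
  assumes "in_Ls t1" and "in_Ls t2"
  shows "sem_eq t1 t2 \<longleftrightarrow> t1 = t2"
proof
  assume h: "sem_eq t1 t2"
  have e: "ev t1 = ev t2" using same_ev[OF assms h] .
  have c1: "sval (\<lambda>_. 1) t1 = sval (\<lambda>_. 1) t2" and c2: "sval (\<lambda>_. 2) t1 = sval (\<lambda>_. 2) t2"
    using h unfolding sem_eq_def by blast+
  show "t1 = t2"
  proof (cases t1)
    case (A E x S)
    show ?thesis
    proof (cases t2)
      case (A E' x' S')
      have "sval (\<lambda>v. if v = x then 2 else 1) t1 = sval (\<lambda>v. if v = x then 2 else 1) t2"
        using h unfolding sem_eq_def by blast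
      with c1 e assms show ?thesis using \<open>t1 = _\<close> A by (auto split: if_splits)
    next
      case (B E' S')
      with c1 c2 \<open>t1 = _\<close> show ?thesis by auto
    qed
  next
    case (B E S)
    show ?thesis
    proof (cases t2)
      case (A E' x' S')
      with c1 c2 \<open>t1 = _\<close> show ?thesis by auto
    next
      case (B E' S')
      with c1 e \<open>t1 = _\<close> show ?thesis by auto
    qed
  qed
qed (simp add: sem_eq_def)

end
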